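(* Consider the convex problem $\mathcal{P}_n$ described in the context, and let $(\mathbf{V}_0^\ast,\{\mathbf{V}_k^\ast\},\boldsymbol{\Lambda}^\ast,\dots,\omega^\ast)$ be an optimal solution together with optimal Lagrange multipliers satisfying the KKT conditions (K2), (K4), (K5) of the context with $\psi_4^{k\ast}>0$. If $\mathrm{rank}(\mathbf{V}_k^\ast)>1$ for some $k\in\mathcal{K}$, then there exists a rank-one positive semidefinite matrix $\hat{\mathbf{V}}_k$ with $\mathbf{V}_k^\ast-\hat{\mathbf{V}}_k\succeq 0$ such that the point obtained from the optimal solution by replacing $\mathbf{V}_k^\ast$ with $\hat{\mathbf{V}}_k$ and $\boldsymbol{\Lambda}^\ast$ with $\hat{\boldsymbol{\Lambda}}=\boldsymbol{\Lambda}^\ast+(\mathbf{V}_k^\ast-\hat{\mathbf{V}}_k)$ (keeping $\mathbf{V}_0^\ast$ and all other variables unchanged) is feasible for $\mathcal{P}_n$ and attains the same objective value; here $\mathbf{V}_k^\ast-\hat{\mathbf{V}}_k$ is a nonnegative combination of projections onto an orthonormal basis of the null space of $\mathbf{Y}_k^\ast$ (the matrix $\mathbf{Y}_k$ evaluated at the optimal multipliers).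
   Context: Setting. Let $N,L,K,Z$ be positive integers and write $\mathcal{L}=\{1,\dots,L\}$, $\mathcal{K}=\{1,\dots,K\}$, $\mathcal{Z}=\{1,\dots,Z\}$. Given are row vectors $\mathbf{g}_l\in\mathbb{C}^{1\times N}$ ($l\in\mathcal{L}$; fronthaul channels from an $N$-antenna central processor to $L$ base stations), $\bar{\mathbf{h}}_k\in\mathbb{C}^{1\times L}$ ($k\in\mathcal{K}$; equivalent user channels) and $\bar{\mathbf{h}}^{e}_z\in\mathbb{C}^{1\times L}$ ($z\in\mathcal{Z}$; equivalent eavesdropper channels). Set $\mathbf{G}_l=\mathbf{g}_l^H\mathbf{g}_l$, $\bar{\mathbf{H}}_k=\bar{\mathbf{h}}_k^H\bar{\mathbf{h}}_k$, $\bar{\mathbf{H}}^e_z=(\bar{\mathbf{h}}^e_z)^H\bar{\mathbf{h}}^e_z$. Given are positive constants $W_{mm},W_{mc},N_0,P^{BS}_{\max},P^{AC}_{\max}$, $\eta=W_{mc}/W_{mm}$, and iteration constants $\beta_k^{[n]}>0$, $\varepsilon_k^{[n]}>0$, $\lambda_k^{[n]}\in\mathbb{R}$, $\tau_k^{[n]}>-1$ ($k\in\mathcal{K}$), $\mu_k^{z[n]}\in\mathbb{R}$, $\gamma_k^{z[n]}>-1$ ($k\in\mathcal{K},z\in\mathcal{Z}$). All logarithms are natural. Problem $\mathcal{P}_n$ (the rank-relaxed convex subproblem at iteration $n$). Variables: Hermitian $\mathbf{V}_0\in\mathbb{C}^{N\times N}$, Hermitian $\mathbf{V}_k\in\mathbb{C}^{L\times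 L}$ ($k\in\mathcal{K}$), Hermitian $\boldsymbol{\Lambda}\in\mathbb{C}^{L\times L}$, and real scalars $\varepsilon_k,\beta_k,\tau_k,\theta_k,\lambda_k$ ($k\in\mathcal{K}$), $\gamma_k^z,\zeta_k^z,\mu_k^z$ ($k\in\mathcal{K},z\in\mathcal{Z}$), $\omega$. Objective (to maximize): $\sum_{k=1}^K W_{mm}\big[\log(1+\beta_k)-\log(1+\gamma_k^{z[n]})-\frac{\gamma_k^z-\gamma_k^{z[n]}}{1+\gamma_k^{z[n]}}\big]$, which depends only on the scalar variables $\beta_k,\gamma_k^z$. Constraints, for all $k\in\mathcal{K}$, $z\in\mathcal{Z}$, $l\in\mathcal{L}$: (C1) $\sum_{k=1}^K\mathrm{Tr}(\mathbf{V}_k)+\mathrm{Tr}(\boldsymbol{\Lambda})\le P^{BS}_{\max}$; (C2) $\mathrm{Tr}(\mathbf{V}_0)\le P^{AC}_{\max}$; (C3) $\mathbf{V}_0\succeq 0$, $\mathbf{V}_k\succeq 0$, $\boldsymbol{\Lambda}\succeq 0$; (C4) $\varepsilon_k\ge\sum_{i\ne k}\mathrm{Tr}(\bar{\mathbf{H}}_k\mathbf{V}_i)+\mathrm{Tr}(\bar{\mathbf{H}}_k\boldsymbol{\Lambda})+W_{mm}N_0$; (C5) $\frac{\beta_k^{[n]}}{2\varepsilon_k^{[n]}}\varepsilon_k^2+\frac{\varepsilon_k^{[n]}}{2\beta_k^{[n]}}\beta_k^2\le\mathrm{Tr}(\bar{\mathbf{H}}_k\mathbf{V}_k)$; (C6)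 $\mathrm{Tr}(\bar{\mathbf{H}}^e_z\mathbf{V}_k)-\gamma_k^zW_{mm}N_0\le\zeta_k^z$; (C7) $\zeta_k^z\le 2\mu_k^{z[n]}\mu_k^z-(\mu_k^{z[n]})^2$; (C8) $\begin{bmatrix}\gamma_k^z&\mu_k^z\\ \mu_k^z&\sum_{i\ne k}\mathrm{Tr}(\bar{\mathbf{H}}^e_z\mathbf{V}_i)+\mathrm{Tr}(\bar{\mathbf{H}}^e_z\boldsymbol{\Lambda})\end{bmatrix}\succeq 0$; (C9) $\mathrm{Tr}(\mathbf{G}_l\mathbf{V}_0)\ge W_{mc}N_0(e^{\omega/\eta}-1)$ (equivalently $\omega\le\eta\log(1+\mathrm{Tr}(\mathbf{G}_l\mathbf{V}_0)/(W_{mc}N_0))$); (C10) $\mathrm{Tr}(\bar{\mathbf{H}}_k\mathbf{V}_k)-\tau_kW_{mm}N_0\le\theta_k$; (C11) $\theta_k\le 2\lambda_k^{[n]}\lambda_k-(\lambda_k^{[n]})^2$; (C12) $\begin{bmatrix}\tau_k&\lambda_k\\ \lambda_k&\sum_{i\ne k}\mathrm{Tr}(\bar{\mathbf{H}}_k\mathbf{V}_i)+\mathrm{Tr}(\bar{\mathbf{H}}_k\boldsymbol{\Lambda})\end{bmatrix}\succeq 0$; (C13) $\omega\ge\sum_{k=1}^K\big[\log(1+\tau_k^{[n]})+\frac{\tau_k-\tau_k^{[n]}}{1+\tau_k^{[n]}}\big]$. No rank constraint is imposed (SDP relaxation). Lagrange multipliers and KKT conditions. Associate nonnegative multipliers $\psi_1$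 with (C1), $\psi_2$ with (C2), $\psi_3^k$ with (C4), $\psi_4^k$ with (C5), $\psi_5^{z,k}$ with (C6), $\psi_7^k$ with (C10), $\psi_9^l$ with (C9), positive semidefinite matrices $\boldsymbol{\Omega}_k$ with $\mathbf{V}_k\succeq 0$ ($k=0,\dots,K$), and, following the paper, nonnegative scalars $\psi_6^{z,k}$ and $\psi_8^k$ accounting for (C8) and (C12) through Lagrangian terms $\psi_6^{z,k}\big(\sum_{i\ne k}\mathrm{Tr}(\bar{\mathbf{H}}^e_z\mathbf{V}_i)+\mathrm{Tr}(\bar{\mathbf{H}}^e_z\boldsymbol{\Lambda})\big)$ and $\psi_8^k\big(\sum_{i\ne k}\mathrm{Tr}(\bar{\mathbf{H}}_k\mathbf{V}_i)+\mathrm{Tr}(\bar{\mathbf{H}}_k\boldsymbol{\Lambda})\big)$. For $k\in\mathcal{K}$ define $\mathbf{Y}_k=\psi_1\mathbf{I}+\sum_{i\ne k}(\psi_3^i-\psi_8^i)\bar{\mathbf{H}}_i+\sum_{z=1}^Z\big(\psi_5^{z,k}-\sum_{i\ne k}\psi_6^{z,i}\big)\bar{\mathbf{H}}^e_z+\psi_7^k\bar{\mathbf{H}}_k$. "Optimal Lagrange multipliers" are multipliers which, together with an optimal solution of $\mathcal{P}_n$, satisfy the KKT conditions, in particular: (K1) $\boldsymbol{\Omega}_0=\psi_2\mathbf{I}-\sum_{l=1}^L\psi_9^l\mathbf{G}_l$; (K2) $\boldsymbol{\Omega}_k=\mathbf{Y}_k-\psi_4^k\bar{\mathbf{H}}_k$,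 $k\in\mathcal{K}$; (K3) $\psi_9^l\big(\mathrm{Tr}(\mathbf{G}_l\mathbf{V}_0)-W_{mc}N_0(e^{\omega/\eta}-1)\big)=0$, $l\in\mathcal{L}$; (K4) $\boldsymbol{\Omega}_k\mathbf{V}_k=\mathbf{0}$, $k=0,\dots,K$; (K5) $\boldsymbol{\Omega}_k\succeq 0$, $k=0,\dots,K$. *)

theory Defs
  imports "HOL-Analysis.Analysis"
begin

definition herm :: "complex^'m^'m \<Rightarrow> bool" where
  "herm A \<longleftrightarrow> (\<chi> i j. cnj (A $ j $ i)) = A"

definition qform :: "complex^'m^'m \<Rightarrow> complex^'m \<Rightarrow> complex" where
  "qform A x = (\<Sum>i\<in>UNIV. \<Sum>j\<in>UNIV. cnj (x $ i) * A $ i $ j * x $ j)"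

definition psd :: "complex^'m^'m \<Rightarrow> bool" where
  "psd A \<longleftrightarrow> herm A \<and> (\<forall>x. 0 \<le> Re (qform A x))"

text \<open>For a row vector h, the matrix h^H h.\<close>
definition gramr :: "complex^'m \<Rightarrow> complex^'m^'m" where
  "gramr h = (\<chi> i j. cnj (h $ i) * h $ j)"

definition outer :: "complex^'m \<Rightarrow> complex^'m^'m" where
  "outer u = (\<chi> i j. u $ i * cnj (u $ j))"

definition cinner :: "complex^'m \<Rightarrow> complex^'m \<Rightarrow> complex" where
  "cinner u v = (\<Sum>i\<in>UNIV. cnj (u $ i) * v $ i)"

definition orthonormal_set :: "(complex^'m) set \<Rightarrow> bool" where
  "orthonormal_set U \<longleftrightarrow> (\<forall>u\<in>U. \<forall>v\<in>U. cinner u v = (if u = v then 1 else 0))"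

text \<open>Real part of Tr(A B) (for Hermitian A, B this trace is real).\<close>
definition rtr :: "complex^'m^'m \<Rightarrow> complex^'m^'m \<Rightarrow> real" where
  "rtr A B = Re (trace (A ** B))"

definition rtrace :: "complex^'m^'m \<Rightarrow> real" where
  "rtrace A = Re (trace A)"

definition mat2 :: "real \<Rightarrow> real \<Rightarrow> real \<Rightarrow> real \<Rightarrow> complex^2^2" where
  "mat2 a b c e = (\<chi> i j. complex_of_real
      (if i = 1 then (if j = 1 then a else b) else (if j = 1 then c else e)))"

text \<open>Users are indexed by 1..nK, eavesdroppers by 1..nZ, base stations by the finite
  type 'l, CP antennas by the finite type 'n.\<close>
record ('n, 'l) pdata =
  gf :: "'l \<Rightarrow> complex^'n"
  hb :: "nat \<Rightarrow> complex^'l"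
  he :: "nat \<Rightarrow> complex^'l"
  nK :: nat
  nZ :: nat
  Wmm :: real
  Wmc :: real
  N0 :: real
  PBS :: real
  PAC :: real
  beta_n :: "nat \<Rightarrow> real"
  eps_n :: "nat \<Rightarrow> real"
  lam_n :: "nat \<Rightarrow> real"
  tau_n :: "nat \<Rightarrow> real"
  mu_n :: "nat \<Rightarrow> nat \<Rightarrow> real"   \<comment> \<open>mu_n k z = mu_k^{z[n]}\<close>
  gam_n :: "nat \<Rightarrow> nat \<Rightarrow> real"  \<comment> \<open>gam_n k z = gamma_k^{z[n]}\<close>

record ('n, 'l) point =
  V0 :: "complex^'n^'n"
  Vk :: "nat \<Rightarrow> complex^'l^'l"
  Lam :: "complex^'l^'l"
  eps :: "nat \<Rightarrow> real"
  beta :: "nat \<Rightarrow> real"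
  tau :: "nat \<Rightarrow> real"
  theta :: "nat \<Rightarrow> real"
  lam :: "nat \<Rightarrow> real"
  gam :: "nat \<Rightarrow> nat \<Rightarrow> real"   \<comment> \<open>gam k z = gamma_k^z\<close>
  zeta :: "nat \<Rightarrow> nat \<Rightarrow> real"
  mu :: "nat \<Rightarrow> nat \<Rightarrow> real"
  om :: real

definition Kset :: "('n::finite, 'l::finite) pdata \<Rightarrow> nat set" where
  "Kset d = {1..nK d}"

definition Zset :: "('n::finite, 'l::finite) pdata \<Rightarrow> nat set" where
  "Zset d = {1..nZ d}"

definition eta :: "('n::finite, 'l::finite) pdata \<Rightarrow> real" where
  "eta d = Wmc d / Wmm d"

definition data_ok :: "('n::finite, 'l::finite) pdata \<Rightarrow> bool" where
  "data_ok d \<longleftrightarrow> nK d > 0 \<and> nZ d > 0 \<and> Wmm d > 0 \<and> Wmc d > 0 \<and> N0 d > 0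
     \<and> PBS d > 0 \<and> PAC d > 0
     \<and> (\<forall>k\<in>Kset d. beta_n d k > 0 \<and> eps_n d k > 0 \<and> tau_n d k > -1)
     \<and> (\<forall>k\<in>Kset d. \<forall>z\<in>Zset d. gam_n d k z > -1)"

definition interf :: "('n::finite, 'l::finite) pdata \<Rightarrow> ('n, 'l) point \<Rightarrow> nat \<Rightarrow> real" where
  "interf d s k = (\<Sum>i\<in>Kset d - {k}. rtr (gramr (hb d k)) (Vk s i)) + rtr (gramr (hb d k)) (Lam s)"

definition einterf :: "('n::finite, 'l::finite) pdata \<Rightarrow> ('n, 'l) point \<Rightarrow> nat \<Rightarrow> nat \<Rightarrow> real" where
  "einterf d s k z = (\<Sum>i\<in>Kset d - {k}. rtr (gramr (he d z)) (Vk s i)) + rtr (gramr (he d z)) (Lam s)"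

definition feasible :: "('n::finite, 'l::finite) pdata \<Rightarrow> ('n, 'l) point \<Rightarrow> bool" where
  "feasible d s \<longleftrightarrow>
     herm (V0 s) \<and> (\<forall>k\<in>Kset d. herm (Vk s k)) \<and> herm (Lam s)
   \<comment> \<open>C1\<close>
   \<and> (\<Sum>k\<in>Kset d. rtrace (Vk s k)) + rtrace (Lam s) \<le> PBS d
   \<comment> \<open>C2\<close>
   \<and> rtrace (V0 s) \<le> PAC d
   \<comment> \<open>C3\<close>
   \<and> psd (V0 s) \<and> (\<forall>k\<in>Kset d. psd (Vk s k)) \<and> psd (Lam s)
   \<and> (\<forall>k\<in>Kset d.
        \<comment> \<open>C4\<close>
        eps s k \<ge> interf d s k + Wmm d * N0 d
        \<comment> \<open>C5\<close>
      \<and> beta_n d k / (2 * eps_n d k) * (eps s k)\<^sup>2 + eps_n d k / (2 * beta_n d k) * (beta s k)\<^sup>2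
          \<le> rtr (gramr (hb d k)) (Vk s k)
        \<comment> \<open>C10\<close>
      \<and> rtr (gramr (hb d k)) (Vk s k) - tau s k * Wmm d * N0 d \<le> theta s k
        \<comment> \<open>C11\<close>
      \<and> theta s k \<le> 2 * lam_n d k * lam s k - (lam_n d k)\<^sup>2
        \<comment> \<open>C12\<close>
      \<and> psd (mat2 (tau s k) (lam s k) (lam s k) (interf d s k))
      \<and> (\<forall>z\<in>Zset d.
          \<comment> \<open>C6\<close>
          rtr (gramr (he d z)) (Vk s k) - gam s k z * Wmm d * N0 d \<le> zeta s k z
          \<comment> \<open>C7\<close>
        \<and> zeta s k z \<le> 2 * mu_n d k z * mu s k z - (mu_n d k z)\<^sup>2
          \<comment> \<open>C8\<close>
        \<and> psd (mat2 (gam s k z) (mu s k z) (mu s k z) (einterf d s k z))))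
   \<comment> \<open>C9\<close>
   \<and> (\<forall>l. rtr (gramr (gf d l)) (V0 s) \<ge> Wmc d * N0 d * (exp (om s / eta d) - 1))
   \<comment> \<open>C13\<close>
   \<and> om s \<ge> (\<Sum>k\<in>Kset d. ln (1 + tau_n d k) + (tau s k - tau_n d k) / (1 + tau_n d k))"

text \<open>Objective; the eavesdropper index z appears free in the paper's objective and is
  a parameter here.\<close>
definition obj :: "('n::finite, 'l::finite) pdata \<Rightarrow> nat \<Rightarrow> ('n, 'l) point \<Rightarrow> real" where
  "obj d z s = (\<Sum>k\<in>Kset d. Wmm d * (ln (1 + beta s k) - ln (1 + gam_n d k z)
                    - (gam s k z - gam_n d k z) / (1 + gam_n d k z)))"

definition optimal :: "('n::finite, 'l::finite) pdata \<Rightarrow> nat \<Rightarrow> ('n, 'l) point \<Rightarrow> bool" where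
  "optimal d z s \<longleftrightarrow> feasible d s \<and> (\<forall>s'. feasible d s' \<longrightarrow> obj d z s' \<le> obj d z s)"

text \<open>The matrix Y_k (multipliers psi5, psi6 indexed as psi z k).\<close>
definition Ymat :: "('n::finite, 'l::finite) pdata \<Rightarrow> real \<Rightarrow> (nat \<Rightarrow> real) \<Rightarrow>
    (nat \<Rightarrow> nat \<Rightarrow> real) \<Rightarrow> (nat \<Rightarrow> nat \<Rightarrow> real) \<Rightarrow> (nat \<Rightarrow> real) \<Rightarrow> (nat \<Rightarrow> real) \<Rightarrow>
    nat \<Rightarrow> complex^'l^'l" where
  "Ymat d psi1 psi3 psi5 psi6 psi7 psi8 k =
     psi1 *\<^sub>R mat 1
   + (\<Sum>i\<in>Kset d - {k}. (psi3 i - psi8 i) *\<^sub>R gramr (hb d i))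
   + (\<Sum>z\<in>Zset d. (psi5 z k - (\<Sum>i\<in>Kset d - {k}. psi6 z i)) *\<^sub>R gramr (he d z))
   + psi7 k *\<^sub>R gramr (hb d k)"

end

theory Submission imports Defs begin

definition cv :: "complex^'m \<Rightarrow> complex^'m" where "cv h = (\<chi> i. cnj (h $ i))"

lemma herm_entry: "herm A \<Longrightarrow> A $ i $ j = cnj (A $ j $ i)"
  unfolding herm_def by (metis (no_types, lifting) vec_lambda_beta)

lemma herm_cnj: "herm A \<Longrightarrow> cnj (A $ i $ j) = A $ j $ i"
  using herm_entry[of A j i] by simp

lemma qform_cinner: "qform A x = cinner x (A *v x)"
  unfolding qform_def cinner_def matrix_vector_mult_def
  by (simp add: sum_distrib_left mult.assoc)

lemma cinner_add_right: "cinner x (y + z) = cinner x y + cinner x z"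
  unfolding cinner_def by (simp add: distrib_left sum.distrib)
lemma cinner_add_left: "cinner (x + y) z = cinner x z + cinner y z"
  unfolding cinner_def by (simp add: distrib_right sum.distrib)
lemma cinner_diff_right: "cinner x (y - z) = cinner x y - cinner x z"
  unfolding cinner_def by (simp add: right_diff_distrib sum_subtractf)
lemma cinner_diff_left: "cinner (x - y) z = cinner x z - cinner y z"
  unfolding cinner_def by (simp add: left_diff_distrib sum_subtractf)
lemma cinner_smult_right: "cinner x (a *s y) = a * cinner x y"
  unfolding cinner_def by (simp add: sum_distrib_left algebra_simps)
lemma cinner_smult_left: "cinner (a *s x) y = cnj a * cinner x y"
  unfolding cinner_def by (simp add: sum_distrib_left algebra_simps)
lemma cinner_zero_right[simp]: "cinner x 0 = 0"
  unfolding cinner_def by simp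
lemma cinner_zero_left[simp]: "cinner 0 x = 0"
  unfolding cinner_def by simp
lemma cinner_commute: "cinner y x = cnj (cinner x y)"
  unfolding cinner_def by (simp add: mult.commute)
lemma cinner_self: "cinner x x = of_real ((norm x)\<^sup>2)"
proof -
  have "cinner x x = (\<Sum>i\<in>UNIV. of_real ((norm (x $ i))\<^sup>2))"
    unfolding cinner_def by (rule sum.cong) (simp_all add: complex_norm_square mult.commute del: of_real_power)
  also have "\<dots> = of_real (\<Sum>i\<in>UNIV. (norm (x $ i))\<^sup>2)" by simp
  also have "(\<Sum>i\<in>UNIV. (norm (x $ i))\<^sup>2) = (norm x)\<^sup>2"
    unfolding norm_vec_def L2_set_def by (simp add: sum_nonneg)
  finally show ?thesis .
qed
lemma cinner_self_eq0: "cinner x x = 0 \<longleftrightarrow> x = 0"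
  by (simp add: cinner_self)

lemma herm_cinner: "herm A \<Longrightarrow> cinner x (A *v y) = cinner (A *v x) y"
proof -
  assume h: "herm A"
  have "cinner x (A *v y) = (\<Sum>i\<in>UNIV. \<Sum>j\<in>UNIV. cnj (x $ i) * A $ i $ j * y $ j)"
    unfolding cinner_def matrix_vector_mult_def by (simp add: sum_distrib_left mult.assoc)
  also have "\<dots> = (\<Sum>j\<in>UNIV. \<Sum>i\<in>UNIV. cnj (x $ i) * A $ i $ j * y $ j)"
    by (rule sum.swap)
  also have "\<dots> = cinner (A *v x) y"
    unfolding cinner_def matrix_vector_mult_def
    by (simp add: sum_distrib_right sum_distrib_left herm_cnj[OF h] mult.commute mult.left_commute)
  finally show ?thesis .
qed


lemma mv_add_right: "A *v (x + y) = A *v x + A *v (y::'a::comm_ring_1^'n)"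
  by (simp add: vec_eq_iff matrix_vector_mult_def distrib_left sum.distrib)
lemma mv_diff_right: "A *v (x - y) = A *v x - A *v (y::'a::comm_ring_1^'n)"
  by (simp add: vec_eq_iff matrix_vector_mult_def right_diff_distrib sum_subtractf)
lemma mv_smult_right: "A *v (c *s x) = c *s (A *v (x::'a::comm_ring_1^'n))"
  by (simp add: vec_eq_iff matrix_vector_mult_def sum_distrib_left algebra_simps)
lemma mv_add_left: "(A + B) *v x = A *v x + B *v (x::'a::comm_ring_1^'n)"
  by (simp add: vec_eq_iff matrix_vector_mult_def distrib_right sum.distrib)
lemma mv_diff_left: "(A - B) *v x = A *v x - B *v (x::'a::comm_ring_1^'n)"
  by (simp add: vec_eq_iff matrix_vector_mult_def left_diff_distrib sum_subtractf)
lemma cplx_scaleR: "c *\<^sub>R (z::complex) = of_real c * z"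
  by (simp add: scaleR_conv_of_real)
lemma mv_scaleR_left: "(c *\<^sub>R A) *v x = complex_of_real c *s (A *v (x::complex^'n))"
  by (simp add: vec_eq_iff matrix_vector_mult_def sum_distrib_left cplx_scaleR algebra_simps)
lemma mv_zero_left: "(0::'a::comm_ring_1^'n^'m) *v x = 0"
  by (simp add: vec_eq_iff matrix_vector_mult_def)
lemma mv_sum_left: "finite U \<Longrightarrow> (\<Sum>u\<in>U. A u) *v (x::'a::comm_ring_1^'n) = (\<Sum>u\<in>U. A u *v x)"
  by (induction U rule: finite_induct) (simp_all add: mv_zero_left mv_add_left)
lemma mv_mat1: "mat 1 *v x = (x::'a::comm_ring_1^'n)"
  by simp

lemma scaleR_vec_smult: "c *\<^sub>R (x::complex^'n) = complex_of_real c *s x"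
  by (simp add: vec_eq_iff cplx_scaleR)

lemma outer_mv: "outer u *v x = cinner u x *s u"
  by (simp add: vec_eq_iff matrix_vector_mult_def outer_def cinner_def sum_distrib_left algebra_simps)

lemma gramr_mv: "gramr h *v x = cinner (cv h) x *s cv h"
  by (simp add: vec_eq_iff matrix_vector_mult_def gramr_def cinner_def cv_def sum_distrib_left algebra_simps)

lemma cinner_cv: "cinner (cv h) x = (\<Sum>i\<in>UNIV. h $ i * x $ i)"
  by (simp add: cinner_def cv_def)

lemma rtr_gramr: "rtr (gramr h) A = Re (cinner (cv h) (A *v cv h))"
proof -
  have "trace (gramr h ** A) = (\<Sum>i\<in>UNIV. \<Sum>j\<in>UNIV. cnj (h $ i) * h $ j * A $ j $ i)"
    by (simp add: trace_def matrix_matrix_mult_def gramr_def mult.assoc)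
  also have "\<dots> = (\<Sum>j\<in>UNIV. \<Sum>i\<in>UNIV. cnj (h $ i) * h $ j * A $ j $ i)"
    by (rule sum.swap)
  also have "\<dots> = cinner (cv h) (A *v cv h)"
    by (simp add: cinner_def cv_def matrix_vector_mult_def sum_distrib_left algebra_simps)
  finally show ?thesis unfolding rtr_def by simp
qed

lemma herm_add: "herm A \<Longrightarrow> herm B \<Longrightarrow> herm (A + B)"
  unfolding herm_def by (simp add: vec_eq_iff)
lemma herm_diff: "herm A \<Longrightarrow> herm B \<Longrightarrow> herm (A - B)"
  unfolding herm_def by (simp add: vec_eq_iff)
lemma herm_scaleR: "herm A \<Longrightarrow> herm (c *\<^sub>R A)"
  unfolding herm_def by (simp add: vec_eq_iff cplx_scaleR)
lemma herm_outer: "herm (outer u)"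
  unfolding herm_def outer_def by (simp add: vec_eq_iff mult.commute)
lemma herm_gramr: "herm (gramr u)"
  unfolding herm_def gramr_def by (simp add: vec_eq_iff mult.commute)
lemma herm_mat1: "herm (mat 1 :: complex^'n^'n)"
  by (simp add: herm_def vec_eq_iff mat_def)
lemma herm_zero: "herm (0 :: complex^'n^'n)"
  by (simp add: herm_def vec_eq_iff)
lemma herm_sum: "finite U \<Longrightarrow> (\<And>u. u \<in> U \<Longrightarrow> herm (A u)) \<Longrightarrow> herm (\<Sum>u\<in>U. A u)"
  by (induction U rule: finite_induct) (simp_all add: herm_zero herm_add)

lemma psd_iff: "psd A \<longleftrightarrow> herm A \<and> (\<forall>x. 0 \<le> Re (cinner x (A *v x)))"
  unfolding psd_def qform_cinner ..

lemma psd_add: "psd A \<Longrightarrow> psd B \<Longrightarrow> psd (A + B)"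
  unfolding psd_iff by (simp add: herm_add mv_add_left cinner_add_right)
lemma psd_scaleR: "psd A \<Longrightarrow> c \<ge> 0 \<Longrightarrow> psd (c *\<^sub>R A)"
  unfolding psd_iff by (simp add: herm_scaleR mv_scaleR_left cinner_smult_right)
lemma psd_outer: "psd (outer u)"
  unfolding psd_iff
proof (intro conjI allI herm_outer)
  fix x
  have "cinner x (outer u *v x) = cinner u x * cinner x u"
    by (simp add: outer_mv cinner_smult_right mult.commute)
  also have "\<dots> = of_real ((cmod (cinner u x))\<^sup>2)"
    by (subst cinner_commute[of x u]) (simp add: complex_norm_square del: of_real_power)
  finally show "0 \<le> Re (cinner x (outer u *v x))" by simp
qed

lemma real_quad_lemma:
  fixes n q :: real
  assumes n: "n \<ge> 0" and h: "\<And>t. 0 \<le> 2 * t * n + t\<^sup>2 * q"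
  shows "n = 0"
proof (rule ccontr)
  assume "n \<noteq> 0" then have np: "n > 0" using n by simp
  define a where "a = \<bar>q\<bar> + 1"
  have a: "a > 0" "a \<ge> 1" "q \<le> a" unfolding a_def by auto
  have "0 \<le> 2 * (-n/a) * n + (-n/a)\<^sup>2 * q" by (rule h)
  then have "0 \<le> (2 * (-n) * n * a + n\<^sup>2 * q) / a\<^sup>2"
    using a by (simp add: field_simps power2_eq_square)
  then have "0 \<le> 2 * (-n) * n * a + n\<^sup>2 * q"
    using a by (simp add: divide_nonneg_pos zero_le_divide_iff)
  moreover have "n\<^sup>2 * q \<le> n\<^sup>2 * a" using a by (simp add: mult_left_mono)
  moreover have "n\<^sup>2 * a > 0" using np a by simp
  ultimately show False by (simp add: power2_eq_square algebra_simps)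
qed

lemma zero_form:
  fixes A :: "complex^'n^'n"
  assumes h: "herm A" and nn: "\<forall>y\<in>S. 0 \<le> Re (cinner y (A *v y))" and xS: "x \<in> S"
    and cl: "\<forall>t::real. x + complex_of_real t *s (A *v x) \<in> S"
    and z: "Re (cinner x (A *v x)) = 0"
  shows "A *v x = 0"
proof -
  define w where "w = A *v x"
  define n where "n = Re (cinner w w)"
  define q where "q = Re (cinner w (A *v w))"
  have cww: "cinner w w = of_real n" unfolding n_def by (simp add: cinner_self)
  have "\<And>t. 0 \<le> 2 * t * n + t\<^sup>2 * q"
  proof -
    fix t :: real
    let ?y = "x + complex_of_real t *s w"
    have "0 \<le> Re (cinner ?y (A *v ?y))" using nn cl w_def by auto
    also have "cinner ?y (A *v ?y) = cinner x (A *v x) + of_real t * cinner x (A *v w)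
        + of_real t * cinner w (A *v x) + (of_real t)\<^sup>2 * cinner w (A *v w)"
      by (simp add: mv_add_right mv_smult_right cinner_add_left cinner_add_right
          cinner_smult_left cinner_smult_right power2_eq_square algebra_simps)
    also have "cinner x (A *v w) = cinner w w" using herm_cinner[OF h, of x w] w_def by simp
    also have "cinner w (A *v x) = cinner w w" using w_def by simp
    finally show "0 \<le> 2 * t * n + t\<^sup>2 * q" using z cww unfolding q_def
      by (auto simp: power2_eq_square algebra_simps)
  qed
  then have "n = 0" using real_quad_lemma[of n q] unfolding n_def by (simp add: cinner_self)
  then have "cinner w w = 0" using cww by simp
  then show ?thesis using cinner_self_eq0 w_def by metis
qed

lemma psd_zero_form: "psd A \<Longrightarrow> Re (cinner x (A *v x)) = 0 \<Longrightarrow> A *v x = 0"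
  using zero_form[of A UNIV x] unfolding psd_iff by auto


lemma vsub_closed:
  fixes S :: "(complex^'n) set"
  assumes "vec.subspace S" shows "closed S"
proof (rule closed_subspace)
  show "subspace S" using assms unfolding subspace_def vec.subspace_def
    by (simp add: scaleR_vec_smult)
qed

lemma cont_form: "continuous_on K (\<lambda>x::complex^'n. Re (cinner x (M *v x)))"
  unfolding cinner_def matrix_vector_mult_def
  by (intro continuous_intros continuous_on_component continuous_on_id)

lemma cinner_span_zero:
  assumes "v \<in> vec.span U" "\<forall>u\<in>U. cinner u v = 0" shows "v = 0"
proof -
  have "vec.subspace {w. cinner w v = 0}"
    unfolding vec.subspace_def by (simp add: cinner_add_left cinner_smult_left)
  then have "cinner v v = 0" using vec.span_induct[OF assms(1), of "\<lambda>w. cinner w v = 0"] assms(2)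
    by auto
  then show ?thesis by (simp add: cinner_self_eq0)
qed

lemma cinner_scale_self: "cinner (c *s x) (M *v (c *s x)) = (cmod c)\<^sup>2 * cinner x (M *v x)"
  by (simp add: mv_smult_right cinner_smult_left cinner_smult_right complex_norm_square
      del: of_real_power)

lemma eigen_exists:
  fixes M :: "complex^'n^'n"
  assumes h: "herm M" and sub: "vec.subspace S" and inv: "\<forall>x\<in>S. M *v x \<in> S"
    and ne: "x0 \<in> S" "x0 \<noteq> 0"
  shows "\<exists>e\<in>S. norm e = 1 \<and> M *v e = of_real (Re (cinner e (M *v e))) *s e"
proof -
  let ?f = "\<lambda>x::complex^'n. Re (cinner x (M *v x))"
  define K where "K = S \<inter> sphere 0 1"
  have cK: "compact K" unfolding K_def by (intro closed_Int_compact vsub_closed sub compact_sphere)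
  have nx: "norm x0 > 0" using ne by simp
  let ?n = "\<lambda>x::complex^'n. complex_of_real (1 / norm x) *s x"
  have nK: "?n x \<in> K" if "x \<in> S" "x \<noteq> 0" for x
  proof -
    have eq: "?n x = (1 / norm x) *\<^sub>R x" by (simp only: scaleR_vec_smult)
    have "?n x \<in> S" using that sub by (simp add: vec.subspace_def)
    moreover have "norm (?n x) = 1" unfolding eq using that by simp
    ultimately show ?thesis unfolding K_def by simp
  qed
  have "K \<noteq> {}" using nK[OF ne] by auto
  then obtain e where eK: "e \<in> K" and emax: "\<forall>y\<in>K. ?f y \<le> ?f e"
    using continuous_attains_sup[OF cK _ cont_form] by blast
  define l where "l = ?f e"
  have eS: "e \<in> S" and en: "norm e = 1" using eK unfolding K_def by auto
  have bound: "?f y \<le> l * (norm y)\<^sup>2" if "y \<in> S" for y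
  proof (cases "y = 0")
    case True then show ?thesis by simp
  next
    case False
    have "?f (?n y) \<le> l" using emax nK[OF that False] unfolding l_def by blast
    moreover have "?f (?n y) = ?f y / (norm y)\<^sup>2"
      by (simp add: cinner_scale_self power_divide norm_divide)
    ultimately show ?thesis using False by (simp add: divide_le_eq)
  qed
  define A where "A = l *\<^sub>R mat 1 - M"
  have hA: "herm A" unfolding A_def by (intro herm_diff herm_scaleR herm_mat1 h)
  have Ay: "cinner y (A *v y) = of_real l * cinner y y - cinner y (M *v y)" for y
    unfolding A_def by (simp add: mv_diff_left mv_scaleR_left cinner_diff_right cinner_smult_right)
  have AS: "A *v y \<in> S" if "y \<in> S" for y
    using that sub inv unfolding A_def
    by (simp add: mv_diff_left mv_scaleR_left vec.subspace_diff vec.subspace_scale)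
  have "A *v e = 0"
  proof (rule zero_form[OF hA _ eS])
    show "\<forall>y\<in>S. 0 \<le> Re (cinner y (A *v y))"
      using bound by (simp add: Ay cinner_self)
    show "\<forall>t::real. e + complex_of_real t *s (A *v e) \<in> S"
      using AS[OF eS] eS sub by (simp add: vec.subspace_add vec.subspace_scale)
    show "Re (cinner e (A *v e)) = 0" using en by (simp add: Ay cinner_self l_def)
  qed
  then have "M *v e = of_real l *s e"
    unfolding A_def by (simp add: mv_diff_left mv_scaleR_left)
  then show ?thesis using eS en l_def by blast
qed


lemma orth_inner: "orthonormal_set U \<Longrightarrow> u \<in> U \<Longrightarrow> v \<in> U \<Longrightarrow> cinner u v = (if u = v then 1 else 0)"
  unfolding orthonormal_set_def by blast

lemma spectral_sub:
  fixes M :: "complex^'n^'n"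
  assumes h: "herm M"
  shows "vec.subspace S \<Longrightarrow> (\<forall>x\<in>S. M *v x \<in> S) \<Longrightarrow>
    \<exists>U. finite U \<and> orthonormal_set U \<and> U \<subseteq> S \<and> vec.span U = S
      \<and> (\<forall>u\<in>U. M *v u = of_real (Re (cinner u (M *v u))) *s u)"
proof (induction "vec.dim S" arbitrary: S rule: less_induct)
  case less
  note sub = less.prems(1) and inv = less.prems(2)
  show ?case
  proof (cases "S \<subseteq> {0}")
    case True
    then have "S = {0}" using sub vec.subspace_0 by blast
    then show ?thesis
      by (intro exI[of _ "{}"]) (simp add: orthonormal_set_def vec.span_empty)
  next
    case False
    then obtain x0 where x0: "x0 \<in> S" "x0 \<noteq> 0" by blast
    obtain e where eS: "e \<in> S" and en: "norm e = 1"
      and ee: "M *v e = of_real (Re (cinner e (M *v e))) *s e"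
      using eigen_exists[OF h sub inv x0] by blast
    define l where "l = Re (cinner e (M *v e))"
    have ee2: "M *v e = of_real l *s e" unfolding l_def by (rule ee)
    have cee: "cinner e e = 1" using en by (simp add: cinner_self)
    define S' where "S' = {x\<in>S. cinner e x = 0}"
    have sub': "vec.subspace S'" using sub unfolding S'_def vec.subspace_def
      by (simp add: cinner_add_right cinner_smult_right)
    have inv': "\<forall>x\<in>S'. M *v x \<in> S'"
    proof
      fix x assume x: "x \<in> S'"
      have "cinner e (M *v x) = cinner (M *v e) x" by (rule herm_cinner[OF h])
      also have "\<dots> = 0" using x unfolding S'_def ee2 by (simp add: cinner_smult_left)
      finally show "M *v x \<in> S'" using x inv unfolding S'_def by simp
    qed
    have "vec.span S' \<subset> vec.span S"
    proof -
      have "e \<notin> S'" using cee unfolding S'_def by auto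
      then have "S' \<subset> S" using eS unfolding S'_def by blast
      then show ?thesis using sub sub' by (simp add: vec.span_eq_iff[THEN iffD2])
    qed
    then have "vec.dim S' < vec.dim S" by (rule vec.dim_psubset)
    then obtain U' where U': "finite U'" "orthonormal_set U'" "U' \<subseteq> S'" "vec.span U' = S'"
      "\<forall>u\<in>U'. M *v u = of_real (Re (cinner u (M *v u))) *s u"
      using less.hyps[OF _ sub' inv'] by blast
    have eU': "e \<notin> U'" using U'(3) cee unfolding S'_def by auto
    have eu: "cinner e u = 0" if "u \<in> U'" for u using that U'(3) unfolding S'_def by auto
    have ue: "cinner u e = 0" if "u \<in> U'" for u using eu[OF that] cinner_commute[of u e] by simp
    let ?U = "insert e U'"
    have "orthonormal_set ?U"
      unfolding orthonormal_set_def
    proof (intro ballI)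
      fix u v assume u: "u \<in> ?U" and v: "v \<in> ?U"
      show "cinner u v = (if u = v then 1 else 0)"
      proof (cases "u = e")
        case True
        then show ?thesis
        proof (cases "v = e")
          case False then have "v \<in> U'" using v by simp
          then show ?thesis using \<open>u = e\<close> eu eU' by auto
        qed (simp add: cee)
      next
        case False then have uU: "u \<in> U'" using u by simp
        show ?thesis
        proof (cases "v = e")
          case True then show ?thesis using uU ue eU' by auto
        next
          case False then have "v \<in> U'" using v by simp
          then show ?thesis using uU orth_inner[OF U'(2)] by blast
        qed
      qed
    qed
    moreover have "vec.span ?U = S"
    proof
      show "vec.span ?U \<subseteq> S"
        using U'(3) eS sub unfolding S'_def by (intro vec.span_minimal) auto
      show "S \<subseteq> vec.span ?U"
      proof
        fix x assume x: "x \<in> S"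
        define x' where "x' = x - cinner e x *s e"
        have "x' \<in> S'" unfolding S'_def x'_def using x eS sub cee
          by (simp add: cinner_diff_right cinner_smult_right vec.subspace_diff vec.subspace_scale)
        then have "x' \<in> vec.span ?U" using U'(4) vec.span_mono[of U' ?U] by auto
        moreover have "cinner e x *s e \<in> vec.span ?U"
          by (intro vec.span_scale vec.span_base) simp
        ultimately have "x' + cinner e x *s e \<in> vec.span ?U" by (rule vec.span_add)
        then show "x \<in> vec.span ?U" unfolding x'_def by simp
      qed
    qed
    moreover have "\<forall>u\<in>?U. M *v u = of_real (Re (cinner u (M *v u))) *s u"
      using ee U'(5) by blast
    moreover have "?U \<subseteq> S" using U'(3) eS unfolding S'_def by blast
    moreover have "finite ?U" using U'(1) by simp
    ultimately show ?thesis by blast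
  qed
qed

lemma mv_sum_right: "finite U \<Longrightarrow> A *v (\<Sum>u\<in>U. f u) = (\<Sum>u\<in>U. A *v (f u :: 'a::comm_ring_1^'n))"
  by (induction U rule: finite_induct) (simp_all add: mv_add_right)

lemma cinner_sum_right: "finite U \<Longrightarrow> cinner x (\<Sum>u\<in>U. f u) = (\<Sum>u\<in>U. cinner x (f u))"
  by (induction U rule: finite_induct) (simp_all add: cinner_add_right)

lemma mat_eq_mv: "(\<And>x. A *v x = B *v x) \<Longrightarrow> A = (B::'a::comm_ring_1^'n^'m)"
proof -
  assume eq: "\<And>x. A *v x = B *v x"
  have col: "(C *v axis j 1) $ i = C $ i $ j" for C :: "'a^'n^'m" and i j
    by (simp add: matrix_vector_mult_def axis_def if_distrib cong: if_cong)
  show ?thesis using eq col by (metis vec_eq_iff)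
qed

lemma spectral_full:
  fixes M :: "complex^'n^'n"
  assumes p: "psd M" and sub: "vec.subspace N" and rng: "\<forall>x. M *v x \<in> N"
  shows "\<exists>U c. finite U \<and> orthonormal_set U \<and> U \<subseteq> N \<and> vec.span U = N
      \<and> (\<forall>u\<in>U. c u \<ge> 0) \<and> M = (\<Sum>u\<in>U. c u *\<^sub>R outer u)"
proof -
  have h: "herm M" using p unfolding psd_def by simp
  obtain U where U: "finite U" "orthonormal_set U" "U \<subseteq> N" "vec.span U = N"
      "\<forall>u\<in>U. M *v u = of_real (Re (cinner u (M *v u))) *s u"
    using spectral_sub[OF h sub] rng by blast
  define c where "c u = Re (cinner u (M *v u))" for u
  have cnn: "\<forall>u\<in>U. c u \<ge> 0" using p unfolding psd_iff c_def by simp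
  have U5: "\<forall>u\<in>U. M *v u = of_real (c u) *s u" unfolding c_def using U(5) by blast
  have "M *v x = (\<Sum>u\<in>U. c u *\<^sub>R outer u) *v x" for x
  proof -
    define p where "p = (\<Sum>u\<in>U. cinner u x *s u)"
    have cp: "cinner u p = cinner u x" if "u \<in> U" for u
    proof -
      have "cinner u p = (\<Sum>v\<in>U. cinner v x * (if u = v then 1 else 0))"
        unfolding p_def using U(1) that
        by (simp add: cinner_sum_right cinner_smult_right orth_inner[OF U(2)])
      also have "\<dots> = cinner u x" using U(1) that by (simp add: if_distrib cong: if_cong)
      finally show ?thesis .
    qed
    have "M *v (x - p) = 0"
    proof (rule cinner_span_zero)
      show "M *v (x - p) \<in> vec.span U" using U(4) rng by simp
      show "\<forall>u\<in>U. cinner u (M *v (x - p)) = 0"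
      proof
        fix u assume u: "u \<in> U"
        have "cinner u (M *v (x - p)) = cinner (M *v u) (x - p)" by (rule herm_cinner[OF h])
        also have "\<dots> = 0" using u U5 cp[OF u]
          by (simp add: cinner_smult_left cinner_diff_right)
        finally show "cinner u (M *v (x - p)) = 0" .
      qed
    qed
    then have "M *v x = M *v p" by (simp add: mv_diff_right)
    also have "\<dots> = (\<Sum>u\<in>U. cinner u x *s (M *v u))"
      unfolding p_def using U(1) by (simp add: mv_sum_right mv_smult_right)
    also have "\<dots> = (\<Sum>u\<in>U. (c u *\<^sub>R outer u) *v x)"
      using U5
      by (intro sum.cong refl) (simp add: mv_scaleR_left outer_mv mult.commute)
    also have "\<dots> = (\<Sum>u\<in>U. c u *\<^sub>R outer u) *v x"
      using U(1) by (simp add: mv_sum_left)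
    finally show ?thesis .
  qed
  then have "M = (\<Sum>u\<in>U. c u *\<^sub>R outer u)" by (rule mat_eq_mv)
  then show ?thesis using U cnn by blast
qed


lemma rtr_add: "rtr A (B + C) = rtr A B + rtr A C"
  unfolding rtr_def trace_def matrix_matrix_mult_def
  by (simp add: distrib_left sum.distrib)
lemma rtr_diff: "rtr A (B - C) = rtr A B - rtr A C"
  unfolding rtr_def trace_def matrix_matrix_mult_def
  by (simp add: right_diff_distrib sum_subtractf)
lemma rtrace_add: "rtrace (B + C) = rtrace B + rtrace C"
  unfolding rtrace_def trace_def by (simp add: sum.distrib)
lemma rtrace_diff: "rtrace (B - C) = rtrace B - rtrace C"
  unfolding rtrace_def trace_def by (simp add: sum_subtractf)
lemma psd_rtr_nonneg: "psd A \<Longrightarrow> 0 \<le> rtr (gramr h) A"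
  unfolding rtr_gramr psd_iff by simp
lemma psd_herm: "psd A \<Longrightarrow> herm A"
  unfolding psd_def by simp

lemma mat2_split: "mat2 a b c e' = mat2 a b c e + (e' - e) *\<^sub>R outer (axis 2 1)"
  unfolding mat2_def outer_def
  by (simp add: vec_eq_iff forall_2 axis_def cplx_scaleR flip: of_real_add of_real_diff)

lemma mat2_mono: "psd (mat2 a b c e) \<Longrightarrow> e \<le> e' \<Longrightarrow> psd (mat2 a b c e')"
  by (subst mat2_split[of _ _ _ _ e]) (intro psd_add psd_scaleR psd_outer, simp_all)

lemma feas_step:
  fixes d :: "('n::finite, 'l::finite) pdata" and s :: "('n, 'l) point"
  assumes F: "feasible d s" and k: "k \<in> Kset d" and pVh: "psd Vh" and pD: "psd (Vk s k - Vh)"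
    and tr0: "rtr (gramr (hb d k)) (Vk s k - Vh) = 0"
  shows "feasible d (s\<lparr>Vk := (Vk s)(k := Vh), Lam := Lam s + (Vk s k - Vh)\<rparr>)"
proof -
  define s' where "s' = s\<lparr>Vk := (Vk s)(k := Vh), Lam := Lam s + (Vk s k - Vh)\<rparr>"
  define D where "D = Vk s k - Vh"
  have fin: "finite (Kset d)" unfolding Kset_def by simp
  have s'V: "Vk s' = (Vk s)(k := Vh)" "Lam s' = Lam s + D" unfolding s'_def D_def by simp_all
  have gen: "(\<Sum>j\<in>Kset d - {i}. rtr G (Vk s' j)) + rtr G (Lam s')
      = (\<Sum>j\<in>Kset d - {i}. rtr G (Vk s j)) + rtr G (Lam s) + (if i = k then rtr G D else 0)"
    if i: "i \<in> Kset d" for G i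
  proof (cases "i = k")
    case True
    have "(\<Sum>j\<in>Kset d - {i}. rtr G (Vk s' j)) = (\<Sum>j\<in>Kset d - {i}. rtr G (Vk s j))"
      using True by (intro sum.cong) (auto simp: s'V)
    then show ?thesis using True by (simp add: s'V rtr_add)
  next
    case False
    have kin: "k \<in> Kset d - {i}" using k False by simp
    have f2: "finite (Kset d - {i})" using fin by simp
    have e1: "(\<Sum>j\<in>Kset d - {i}. rtr G (Vk s' j)) = rtr G Vh + (\<Sum>j\<in>Kset d - {i} - {k}. rtr G (Vk s j))"
      using sum.remove[OF f2 kin, of "\<lambda>j. rtr G (Vk s' j)"] by (simp add: s'V)
    have e2: "(\<Sum>j\<in>Kset d - {i}. rtr G (Vk s j)) = rtr G (Vk s k) + (\<Sum>j\<in>Kset d - {i} - {k}. rtr G (Vk s j))"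
      using sum.remove[OF f2 kin, of "\<lambda>j. rtr G (Vk s j)"] by simp
    show ?thesis using False unfolding e1 e2 by (simp add: s'V rtr_add D_def rtr_diff)
  qed
  have interf': "interf d s' i = interf d s i" if "i \<in> Kset d" for i
    using gen[OF that, of "gramr (hb d i)"] tr0 unfolding interf_def D_def by auto
  have einterf': "einterf d s' i z \<ge> einterf d s i z" if "i \<in> Kset d" for i z
    using gen[OF that, of "gramr (he d z)"] psd_rtr_nonneg[OF pD, of "he d z"]
    unfolding einterf_def D_def by auto
  have rtrVk: "rtr (gramr (hb d i)) (Vk s' i) = rtr (gramr (hb d i)) (Vk s i)" if "i \<in> Kset d" for i
  proof (cases "i = k")
    case True
    have "Vh = Vk s k - D" unfolding D_def by simp
    then show ?thesis using True tr0 by (simp add: s'V rtr_diff D_def)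
  qed (simp add: s'V)
  have rtrVe: "rtr (gramr (he d z)) (Vk s' i) \<le> rtr (gramr (he d z)) (Vk s i)" for i z
  proof (cases "i = k")
    case True
    have "Vh = Vk s k - D" unfolding D_def by simp
    then show ?thesis using True psd_rtr_nonneg[OF pD, of "he d z"] by (simp add: s'V rtr_diff D_def)
  qed (simp add: s'V)
  have psdV': "psd (Vk s' i)" if "i \<in> Kset d" for i
    using F that pVh unfolding feasible_def by (simp add: s'V)
  have psdL': "psd (Lam s')" using F pD unfolding feasible_def by (simp add: s'V D_def psd_add)
  have trace': "(\<Sum>j\<in>Kset d. rtrace (Vk s' j)) + rtrace (Lam s') = (\<Sum>j\<in>Kset d. rtrace (Vk s j)) + rtrace (Lam s)"
  proof -
    have "(\<Sum>j\<in>Kset d. rtrace (Vk s' j)) = rtrace Vh + (\<Sum>j\<in>Kset d - {k}. rtrace (Vk s j))"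
      using sum.remove[OF fin k, of "\<lambda>j. rtrace (Vk s' j)"] by (simp add: s'V)
    moreover have "(\<Sum>j\<in>Kset d. rtrace (Vk s j)) = rtrace (Vk s k) + (\<Sum>j\<in>Kset d - {k}. rtrace (Vk s j))"
      using sum.remove[OF fin k, of "\<lambda>j. rtrace (Vk s j)"] by simp
    ultimately show ?thesis by (simp add: s'V rtrace_add D_def rtrace_diff)
  qed
  have same: "V0 s' = V0 s" "eps s' = eps s" "beta s' = beta s" "tau s' = tau s" "theta s' = theta s"
    "lam s' = lam s" "gam s' = gam s" "zeta s' = zeta s" "mu s' = mu s" "om s' = om s"
    unfolding s'_def by simp_all
  have "feasible d s'"
    unfolding feasible_def
  proof (intro conjI ballI allI)
    show "herm (V0 s')" using F unfolding feasible_def same by simp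
    show "herm (Vk s' i)" if "i \<in> Kset d" for i using psdV'[OF that] by (rule psd_herm)
    show "herm (Lam s')" using psdL' by (rule psd_herm)
    show "(\<Sum>k\<in>Kset d. rtrace (Vk s' k)) + rtrace (Lam s') \<le> PBS d"
      using F unfolding feasible_def trace' by simp
    show "rtrace (V0 s') \<le> PAC d" using F unfolding feasible_def same by simp
    show "psd (V0 s')" using F unfolding feasible_def same by simp
    show "psd (Vk s' i)" if "i \<in> Kset d" for i using psdV'[OF that] .
    show "psd (Lam s')" by (rule psdL')
    fix i assume i: "i \<in> Kset d"
    have Fi: "eps s i \<ge> interf d s i + Wmm d * N0 d
      \<and> beta_n d i / (2 * eps_n d i) * (eps s i)\<^sup>2 + eps_n d i / (2 * beta_n d i) * (beta s i)\<^sup>2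
          \<le> rtr (gramr (hb d i)) (Vk s i)
      \<and> rtr (gramr (hb d i)) (Vk s i) - tau s i * Wmm d * N0 d \<le> theta s i
      \<and> theta s i \<le> 2 * lam_n d i * lam s i - (lam_n d i)\<^sup>2
      \<and> psd (mat2 (tau s i) (lam s i) (lam s i) (interf d s i))
      \<and> (\<forall>z\<in>Zset d.
          rtr (gramr (he d z)) (Vk s i) - gam s i z * Wmm d * N0 d \<le> zeta s i z
        \<and> zeta s i z \<le> 2 * mu_n d i z * mu s i z - (mu_n d i z)\<^sup>2
        \<and> psd (mat2 (gam s i z) (mu s i z) (mu s i z) (einterf d s i z)))"
      using F i unfolding feasible_def by blast
    show "eps s' i \<ge> interf d s' i + Wmm d * N0 d" using Fi interf'[OF i] same by simp
    show "beta_n d i / (2 * eps_n d i) * (eps s' i)\<^sup>2 + eps_n d i / (2 * beta_n d i) * (beta s' i)\<^sup>2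
          \<le> rtr (gramr (hb d i)) (Vk s' i)" using Fi rtrVk[OF i] same by simp
    show "rtr (gramr (hb d i)) (Vk s' i) - tau s' i * Wmm d * N0 d \<le> theta s' i"
      using Fi rtrVk[OF i] same by simp
    show "theta s' i \<le> 2 * lam_n d i * lam s' i - (lam_n d i)\<^sup>2" using Fi same by simp
    show "psd (mat2 (tau s' i) (lam s' i) (lam s' i) (interf d s' i))"
      using Fi interf'[OF i] same by simp
    fix z assume z: "z \<in> Zset d"
    show "rtr (gramr (he d z)) (Vk s' i) - gam s' i z * Wmm d * N0 d \<le> zeta s' i z"
      using Fi z rtrVe[of z i] same by force
    show "zeta s' i z \<le> 2 * mu_n d i z * mu s' i z - (mu_n d i z)\<^sup>2" using Fi z same by simp
    show "psd (mat2 (gam s' i z) (mu s' i z) (mu s' i z) (einterf d s' i z))"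
      using mat2_mono[OF _ einterf'[OF i, of z]] Fi z same by simp
  next
    fix l
    show "rtr (gramr (gf d l)) (V0 s') \<ge> Wmc d * N0 d * (exp (om s' / eta d) - 1)"
      using F unfolding feasible_def same by simp
  next
    show "om s' \<ge> (\<Sum>k\<in>Kset d. ln (1 + tau_n d k) + (tau s' k - tau_n d k) / (1 + tau_n d k))"
      using F unfolding feasible_def same by simp
  qed
  then show ?thesis unfolding s'_def .
qed


lemma rank_outer:
  fixes g :: "complex^'n"
  assumes a: "a \<noteq> 0" and g: "g \<noteq> 0"
  shows "rank (a *\<^sub>R outer g) = 1"
proof -
  let ?A = "a *\<^sub>R outer g"
  have row: "row i ?A = (of_real a * g $ i) *s cv g" for i
    by (simp add: vec_eq_iff row_def outer_def cv_def cplx_scaleR)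
  obtain i where gi: "g $ i \<noteq> 0" using g by (metis vec_eq_iff zero_index)
  have cg: "cv g \<noteq> 0" using gi by (metis cv_def complex_cnj_zero_iff vec_lambda_beta zero_index)
  have "vec.span (rows ?A) = vec.span {cv g}"
  proof (rule vec.span_eq[THEN iffD2], rule conjI)
    show "rows ?A \<subseteq> vec.span {cv g}"
    proof
      fix r assume "r \<in> rows ?A"
      then obtain j where rj: "r = row j ?A" unfolding rows_def by blast
      have "(of_real a * g $ j) *s cv g \<in> vec.span {cv g}"
        by (rule vec.span_scale) (simp add: vec.span_base)
      then show "r \<in> vec.span {cv g}" using rj row by simp
    qed
    have "cv g = (1 / (of_real a * g $ i)) *s row i ?A" using a gi by (simp add: row)
    moreover have "row i ?A \<in> vec.span (rows ?A)" unfolding rows_def by (auto intro: vec.span_base)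
    ultimately have "cv g \<in> vec.span (rows ?A)" by (metis vec.span_scale)
    then show "{cv g} \<subseteq> vec.span (rows ?A)" by simp
  qed
  then have "vec.dim (rows ?A) = vec.dim {cv g}" by (metis vec.dim_span)
  then show ?thesis unfolding row_rank_def_gen using cg by simp
qed

lemma rank_zero: "rank (0 :: complex^'n^'m) = 0"
proof -
  have "rows (0 :: complex^'n^'m) = {0}" unfolding rows_def row_def by (auto simp: vec_eq_iff)
  then show ?thesis unfolding row_rank_def_gen by simp
qed

lemma herm_form_real: "herm A \<Longrightarrow> cinner x (A *v x) = of_real (Re (cinner x (A *v x)))"
proof -
  assume h: "herm A"
  have "cinner x (A *v x) = cnj (cinner x (A *v x))"
    using herm_cinner[OF h, of x x] cinner_commute[of "A *v x" x] by simp
  then show ?thesis by (simp add: complex_eq_iff)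
qed

lemma psd_zero: "psd (0 :: complex^'n^'n)"
  unfolding psd_iff by (simp add: herm_zero mv_zero_left)

lemma psd_sum: "finite U \<Longrightarrow> (\<And>u. u \<in> U \<Longrightarrow> psd (A u)) \<Longrightarrow> psd (\<Sum>u\<in>U. A u)"
  by (induction U rule: finite_induct) (simp_all add: psd_zero psd_add)

theorem mainTheorem3:
  fixes d :: "('n::finite, 'l::finite) pdata"
    and s :: "('n, 'l) point"
    and z0 :: nat
    and psi1 :: real
    and psi3 psi4 psi7 psi8 :: "nat \<Rightarrow> real"
    and psi5 psi6 :: "nat \<Rightarrow> nat \<Rightarrow> real"
    and Omega :: "nat \<Rightarrow> complex^'l^'l"
    and k :: nat
  assumes data: "data_ok d"
    and z0: "z0 \<in> Zset d"
    and opt: "optimal d z0 s"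
    and nonneg1: "psi1 \<ge> 0"
    and nonneg2: "\<forall>i\<in>Kset d. psi3 i \<ge> 0 \<and> psi4 i \<ge> 0 \<and> psi7 i \<ge> 0 \<and> psi8 i \<ge> 0"
    and nonneg3: "\<forall>i\<in>Kset d. \<forall>z\<in>Zset d. psi5 z i \<ge> 0 \<and> psi6 z i \<ge> 0"
    and K2: "\<forall>i\<in>Kset d. Omega i = Ymat d psi1 psi3 psi5 psi6 psi7 psi8 i - psi4 i *\<^sub>R gramr (hb d i)"
    and K4: "\<forall>i\<in>Kset d. Omega i ** Vk s i = 0"
    and K5: "\<forall>i\<in>Kset d. psd (Omega i)"
    and k: "k \<in> Kset d"
    and psi4_pos: "psi4 k > 0"
    and rank: "rank (Vk s k) > 1"
  shows "\<exists>Vh :: complex^'l^'l. \<exists>U :: (complex^'l) set. \<exists>c :: complex^'l \<Rightarrow> real.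
           psd Vh \<and> rank Vh = 1 \<and> psd (Vk s k - Vh)
         \<and> feasible d (s\<lparr>Vk := (Vk s)(k := Vh), Lam := Lam s + (Vk s k - Vh)\<rparr>)
         \<and> (\<forall>z. obj d z (s\<lparr>Vk := (Vk s)(k := Vh), Lam := Lam s + (Vk s k - Vh)\<rparr>) = obj d z s)
         \<and> finite U \<and> orthonormal_set U
         \<and> U \<subseteq> {x. Ymat d psi1 psi3 psi5 psi6 psi7 psi8 k *v x = 0}
         \<and> vec.span U = {x. Ymat d psi1 psi3 psi5 psi6 psi7 psi8 k *v x = 0}
         \<and> (\<forall>u\<in>U. c u \<ge> 0)
         \<and> Vk s k - Vh = (\<Sum>u\<in>U. c u *\<^sub>R outer u)"
proof -
  have F: "feasible d s" using opt unfolding optimal_def by simp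
  define a where "a = cv (hb d k)"
  define H where "H = gramr (hb d k)"
  define V where "V = Vk s k"
  define Om where "Om = Omega k"
  define Y where "Y = Ymat d psi1 psi3 psi5 psi6 psi7 psi8 k"
  define p4 where "p4 = psi4 k"
  have psdV: "psd V" using F k unfolding feasible_def V_def by blast
  have hV: "herm V" using psdV by (rule psd_herm)
  have pOm: "psd Om" using K5 k unfolding Om_def by blast
  have OmV: "Om ** V = 0" using K4 k unfolding Om_def V_def by blast
  have Yeq: "Y = Om + p4 *\<^sub>R H" using K2 k unfolding Om_def Y_def p4_def H_def by simp
  have YX: "Y *v x = Om *v x + of_real p4 *s (cinner a x *s a)" for x
    unfolding Yeq H_def a_def by (simp add: mv_add_left mv_scaleR_left gramr_mv)
  define N where "N = {x. Y *v x = 0}"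
  have subN: "vec.subspace N" unfolding N_def vec.subspace_def
    by (simp add: mv_add_right mv_smult_right)
  have inN: "z \<in> N" if "Om *v z = 0" "cinner a z = 0" for z
    using that unfolding N_def by (simp add: YX)
  have Nprop: "cinner a z = 0" if z: "z \<in> N" for z
  proof -
    have "cinner z (Y *v z) = 0" using z unfolding N_def by simp
    then have "cinner z (Om *v z) + of_real p4 * (cinner a z * cinner z a) = 0"
      by (simp add: YX cinner_add_right cinner_smult_right mult.assoc)
    moreover have "cinner a z * cinner z a = of_real ((cmod (cinner a z))\<^sup>2)"
      by (subst cinner_commute[of z a]) (simp add: complex_norm_square del: of_real_power)
    ultimately have "Re (cinner z (Om *v z)) + p4 * (cmod (cinner a z))\<^sup>2 = 0"
      by (metis (no_types, lifting) Re_complex_of_real of_real_mult plus_complex.sel(1) zero_complex.sel(1))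
    moreover have "Re (cinner z (Om *v z)) \<ge> 0" using pOm unfolding psd_iff by simp
    moreover have "p4 > 0" using psi4_pos unfolding p4_def .
    ultimately have "(cmod (cinner a z))\<^sup>2 = 0"
      by (smt (verit, best) mult_pos_pos zero_le_power2 zero_less_power2)
    then show ?thesis by simp
  qed
  have OmVx: "Om *v (V *v x) = 0" for x
    using OmV by (simp add: matrix_vector_mul_assoc mv_zero_left)
  have Vne: "V \<noteq> 0"
  proof
    assume "V = 0"
    then have "rank (Vk s k) = 0" using rank_zero unfolding V_def by metis
    then show False using rank by simp
  qed
  have key: "\<exists>Vh. psd Vh \<and> rank Vh = 1 \<and> psd (V - Vh) \<and> (\<forall>x. (V - Vh) *v x \<in> N)"
  proof -
    define cc where "cc = Re (cinner a (V *v a))"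
    have cc0: "cc \<ge> 0" using psdV unfolding psd_iff cc_def by simp
    have ccr: "cinner a (V *v a) = of_real cc" unfolding cc_def by (rule herm_form_real[OF hV])
    have swap: "cinner (V *v y) x = cinner y (V *v x)" for x y using herm_cinner[OF hV] by simp
    show ?thesis
    proof (cases "cc > 0")
      case True
      define g where "g = V *v a"
      define Vh where "Vh = (1 / cc) *\<^sub>R outer g"
      have gne: "g \<noteq> 0" using True ccr unfolding g_def by auto
      have pVh: "psd Vh" unfolding Vh_def using True by (intro psd_scaleR psd_outer) simp
      have rVh: "rank Vh = 1" unfolding Vh_def using True gne by (intro rank_outer) simp_all
      have Dx: "(V - Vh) *v x = V *v x - of_real (1 / cc) *s (cinner a (V *v x) *s g)" for x
        unfolding Vh_def by (simp add: mv_diff_left mv_scaleR_left outer_mv g_def swap)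
      have DN: "\<forall>x. (V - Vh) *v x \<in> N"
      proof
        fix x
        show "(V - Vh) *v x \<in> N"
        proof (rule inN)
          show "Om *v ((V - Vh) *v x) = 0"
            unfolding Dx g_def by (simp add: mv_diff_right mv_smult_right OmVx)
          show "cinner a ((V - Vh) *v x) = 0"
            unfolding Dx using True
            by (simp add: cinner_diff_right cinner_smult_right g_def ccr)
        qed
      qed
      have hD: "herm (V - Vh)" using hV pVh by (simp add: herm_diff psd_herm)
      have "0 \<le> Re (cinner x ((V - Vh) *v x))" for x
      proof -
        define b where "b = cinner a (V *v x)"
        define Q where "Q = cinner x (V *v x)"
        define al where "al = b / of_real cc"
        define y where "y = x - al *s a"
        have cxg: "cinner x g = cnj b" unfolding g_def b_def
          using swap[of x a] cinner_commute[of a "V *v x"] by simp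
        have e1: "cinner x ((V - Vh) *v x) = Q - of_real (1 / cc) * (b * cnj b)"
          unfolding Dx Q_def b_def using cxg
          by (simp add: cinner_diff_right cinner_smult_right b_def mult.assoc)
        have "cinner y (V *v y) = Q - al * cinner x g - cnj al * b + cnj al * al * cinner a g"
          unfolding y_def Q_def b_def g_def
          by (simp add: mv_diff_right mv_smult_right cinner_diff_right cinner_diff_left
              cinner_smult_right cinner_smult_left algebra_simps)
        also have "\<dots> = Q - of_real (1 / cc) * (b * cnj b)"
          unfolding cxg al_def using True ccr unfolding g_def
          by (simp add: field_simps power2_eq_square)
        finally have "cinner x ((V - Vh) *v x) = cinner y (V *v y)" using e1 by simp
        then show ?thesis using psdV unfolding psd_iff by simp
      qed
      then have pD: "psd (V - Vh)" using hD unfolding psd_iff by simp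
      show ?thesis using pVh rVh pD DN by blast
    next
      case False
      then have "cc = 0" using cc0 by simp
      then have Va: "V *v a = 0" using psd_zero_form[OF psdV] unfolding cc_def by simp
      have VN: "\<forall>x. V *v x \<in> N"
      proof
        fix x show "V *v x \<in> N"
          by (rule inN) (simp_all add: OmVx swap[symmetric] Va)
      qed
      obtain U c where U: "finite U" "orthonormal_set U" "U \<subseteq> N" "vec.span U = N"
          "\<forall>u\<in>U. c u \<ge> 0" "V = (\<Sum>u\<in>U. c u *\<^sub>R outer u)"
        using spectral_full[OF psdV subN VN] by blast
      obtain u0 where u0: "u0 \<in> U" "c u0 > 0"
      proof (rule ccontr)
        assume "\<not> thesis"
        then have "\<forall>u\<in>U. c u = 0" using that U(5) by force
        then have "V = 0" using U(6) by simp
        then show False using Vne by simp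
      qed
      define Vh where "Vh = c u0 *\<^sub>R outer u0"
      have u0ne: "u0 \<noteq> 0" using orth_inner[OF U(2) u0(1) u0(1)] by auto
      have pVh: "psd Vh" unfolding Vh_def using u0 by (intro psd_scaleR psd_outer) simp
      have rVh: "rank Vh = 1" unfolding Vh_def using u0 u0ne by (intro rank_outer) simp_all
      have "V - Vh = (\<Sum>u\<in>U - {u0}. c u *\<^sub>R outer u)"
        unfolding U(6) Vh_def using sum.remove[OF U(1) u0(1), of "\<lambda>u. c u *\<^sub>R outer u"] by simp
      moreover have "psd (\<Sum>u\<in>U - {u0}. c u *\<^sub>R outer u)"
        using U(1,5) by (intro psd_sum psd_scaleR psd_outer) auto
      ultimately have pD: "psd (V - Vh)" by simp
      have DN: "\<forall>x. (V - Vh) *v x \<in> N"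
      proof
        fix x
        have "u0 \<in> N" using U(3) u0 by blast
        then have "Vh *v x \<in> N" unfolding Vh_def using subN
          by (simp add: mv_scaleR_left outer_mv vec.subspace_scale)
        then show "(V - Vh) *v x \<in> N" using VN subN by (simp add: mv_diff_left vec.subspace_diff)
      qed
      show ?thesis using pVh rVh pD DN by blast
    qed
  qed
  then obtain Vh where pVh: "psd Vh" and rVh: "rank Vh = 1" and pD: "psd (V - Vh)"
    and DN: "\<forall>x. (V - Vh) *v x \<in> N" by blast
  have tr0: "rtr (gramr (hb d k)) (Vk s k - Vh) = 0"
    using Nprop[OF DN[rule_format, of a]] unfolding rtr_gramr V_def a_def by simp
  have feas: "feasible d (s\<lparr>Vk := (Vk s)(k := Vh), Lam := Lam s + (Vk s k - Vh)\<rparr>)"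
    using feas_step[OF F k pVh pD[unfolded V_def] tr0] .
  have objeq: "\<forall>z. obj d z (s\<lparr>Vk := (Vk s)(k := Vh), Lam := Lam s + (Vk s k - Vh)\<rparr>) = obj d z s"
    unfolding obj_def by simp
  obtain U c where U: "finite U" "orthonormal_set U" "U \<subseteq> N" "vec.span U = N"
      "\<forall>u\<in>U. c u \<ge> 0" "V - Vh = (\<Sum>u\<in>U. c u *\<^sub>R outer u)"
    using spectral_full[OF pD subN DN] by blast
  show ?thesis
    apply (rule exI[of _ Vh], rule exI[of _ U], rule exI[of _ c])
    using pVh rVh pD feas objeq U unfolding V_def N_def Y_def by blast
qed

end
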